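(* Let $F,\theta \geq 1$ be integers with $F > 2\theta$. For $\rho \in [0,2^{-F})$, let $\eta_0(x)$, $\eta_0(x+1)$ be independent random elements of $\{0,1\}^F$, each with $P(\eta_0 = u) = 1/2 - (2^{F-1}-1)\rho$ for $u \in \{u_-,u_+\}$ and $P(\eta_0 = u) = \rho$ otherwise, where $u_- = (0,\ldots,0)$, $u_+ = (1,\ldots,1)$. Let $\zeta = H(\eta_0(x),\eta_0(x+1))$ and $\phi = -\zeta$ if $\zeta \leq \theta$, $\phi = \zeta - 2\theta$ if $\zeta > \theta$. Then there exists $\rho_0 > 0$ such that $E\phi > 0$ for all $\rho \in (0,\rho_0)$.
   Context: $H(u,v) = \#\{i : u_i \neq v_i\}$ denotes the Hamming distance on $\{0,1\}^F$. *)

theory Defs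
  imports Complex_Main
begin

text \<open>Elements of the cube {0,1}^F are represented as boolean lists of length F.\<close>
definition cube :: "nat \<Rightarrow> bool list set" where
  "cube F = {u. length u = F}"

definition hamming :: "bool list \<Rightarrow> bool list \<Rightarrow> nat" where
  "hamming u v = card {i. i < length u \<and> u ! i \<noteq> v ! i}"

definition eta_prob :: "nat \<Rightarrow> real \<Rightarrow> bool list \<Rightarrow> real" where
  "eta_prob F \<rho> u =
     (if u = replicate F False \<or> u = replicate F True
      then 1/2 - ((2::real) ^ (F - 1) - 1) * \<rho> else \<rho>)"

definition phi :: "nat \<Rightarrow> nat \<Rightarrow> real" where
  "phi \<theta> z = (if z \<le> \<theta> then - real z else real z - 2 * real \<theta>)"

definition expected_phi :: "nat \<Rightarrow> nat \<Rightarrow> real \<Rightarrow> real" where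
  "expected_phi F \<theta> \<rho> =
     (\<Sum>u\<in>cube F. \<Sum>v\<in>cube F. eta_prob F \<rho> u * eta_prob F \<rho> v * phi \<theta> (hamming u v))"

end

theory Submission
  imports Defs
begin

lemma fin_cube: "finite (cube F)"
proof -
  have "cube F = {xs. set xs \<subseteq> UNIV \<and> length xs = F}" by (auto simp: cube_def)
  thus ?thesis using finite_lists_length_eq[of "UNIV::bool set" F] by simp
qed

lemma isCont_eta: "isCont (\<lambda>\<rho>. eta_prob F \<rho> u) x"
  unfolding eta_prob_def by (cases "u = replicate F False \<or> u = replicate F True") (auto intro!: continuous_intros)

lemma isCont_exp: "isCont (expected_phi F \<theta>) x"
proof -
  have e: "expected_phi F \<theta> = (\<lambda>\<rho>. \<Sum>u\<in>cube F. \<Sum>v\<in>cube F. eta_prob F \<rho> u * eta_prob F \<rho> v * phi \<theta> (hamming u v))"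
    by (rule ext) (simp add: expected_phi_def)
  show ?thesis unfolding e
    by (intro continuous_intros isCont_eta)
qed

lemma ham_same: "hamming u u = 0" by (simp add: hamming_def)

lemma ham_diff: "hamming (replicate F False) (replicate F True) = F"
  "hamming (replicate F True) (replicate F False) = F"
proof -
  have "{i. i < F \<and> replicate F False ! i \<noteq> replicate F True ! i} = {..<F}" by auto
  moreover have "{i. i < F \<and> replicate F True ! i \<noteq> replicate F False ! i} = {..<F}" by auto
  ultimately show "hamming (replicate F False) (replicate F True) = F"
    "hamming (replicate F True) (replicate F False) = F" by (simp_all add: hamming_def)
qed

lemma exp0:
  assumes "F \<ge> 1" "F > 2 * \<theta>"
  shows "expected_phi F \<theta> 0 = (real F - 2 * real \<theta>) / 2"
proof -
  let ?a = "replicate F False" and ?b = "replicate F True"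
  let ?S = "{?a, ?b}"
  have ne: "?a \<noteq> ?b" using assms by (cases F) auto
  have sub: "?S \<subseteq> cube F" by (auto simp: cube_def)
  have ph: "phi \<theta> F = real F - 2 * real \<theta>" using assms by (simp add: phi_def)
  have ph0: "phi \<theta> 0 = 0" by (simp add: phi_def)
  have inner: "(\<Sum>v\<in>cube F. eta_prob F 0 u * eta_prob F 0 v * phi \<theta> (hamming u v))
      = (\<Sum>v\<in>?S. eta_prob F 0 u * eta_prob F 0 v * phi \<theta> (hamming u v))" for u
    by (rule sum.mono_neutral_right[OF fin_cube sub]) (auto simp: eta_prob_def)
  have "expected_phi F \<theta> 0 = (\<Sum>u\<in>cube F. \<Sum>v\<in>?S. eta_prob F 0 u * eta_prob F 0 v * phi \<theta> (hamming u v))"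
    unfolding expected_phi_def using inner by simp
  also have "\<dots> = (\<Sum>u\<in>?S. \<Sum>v\<in>?S. eta_prob F 0 u * eta_prob F 0 v * phi \<theta> (hamming u v))"
    by (rule sum.mono_neutral_right[OF fin_cube sub]) (auto simp: eta_prob_def)
  also have "\<dots> = (real F - 2 * real \<theta>) / 2"
    using ne by (simp add: ham_same ham_diff ph ph0 eta_prob_def)
  finally show ?thesis .
qed

theorem lemma10:
  fixes F \<theta> :: nat
  assumes "F \<ge> 1" and "\<theta> \<ge> 1" and "F > 2 * \<theta>"
  shows "\<exists>\<rho>0 > 0. \<forall>\<rho>::real. 0 < \<rho> \<and> \<rho> < \<rho>0 \<and> \<rho> < 1 / 2 ^ F \<longrightarrow> expected_phi F \<theta> \<rho> > 0"
proof -
  have pos: "expected_phi F \<theta> 0 > 0" using exp0[OF assms(1) assms(3)] assms(3) by simp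
  have "(expected_phi F \<theta> \<longlongrightarrow> expected_phi F \<theta> 0) (at 0)"
    using isCont_exp[where F=F and \<theta>=\<theta> and x=0] by (simp add: isCont_def)
  hence "eventually (\<lambda>x. expected_phi F \<theta> x > 0) (at 0)"
    using pos order_tendstoD(1) by blast
  then obtain d :: real where d: "d > 0" "\<And>x. x \<noteq> 0 \<Longrightarrow> dist x 0 < d \<Longrightarrow> expected_phi F \<theta> x > 0"
    unfolding eventually_at by blast
  show ?thesis
    by (rule exI[of _ d]) (use d in auto)
qed

end
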